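(* Let $\mathcal A=\{0,1\}$ and ${\bf u}\in\mathcal A^{\mathbb N}$. If the language of ${\bf u}$ is closed under reversal and $D({\bf u})>0$, then there exists a non-palindromic factor $q$ of ${\bf u}$ such that $0q0$, $0q1$, $1q0$ and $1q1$ are all factors of ${\bf u}$.
   Context: $\widetilde w$ is the reversal of $w$; $w$ is a palindrome if $w=\widetilde w$. The language is closed under reversal if the reversal of every factor is a factor. Palindromic defect: for a finite word $w$ of length $n$, $D(w)=n+1-$(number of distinct palindromic factors of $w$, including the empty word), and $D({\bf u})=\sup D(w)$ over factors $w$ of ${\bf u}$. *)

theory Defs
  imports Main "HOL-Library.Sublist" "HOL-Library.Extended_Real"
begin

definition factor_at :: "(nat \<Rightarrow> 'a) \<Rightarrow> nat \<Rightarrow> nat \<Rightarrow> 'a list" where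
  "factor_at u i n = map u [i..<i+n]"

definition is_factor :: "'a list \<Rightarrow> (nat \<Rightarrow> 'a) \<Rightarrow> bool" where
  "is_factor w u \<longleftrightarrow> (\<exists>i. w = factor_at u i (length w))"

definition palindrome :: "'a list \<Rightarrow> bool" where
  "palindrome w \<longleftrightarrow> rev w = w"

definition closed_under_reversal :: "(nat \<Rightarrow> 'a) \<Rightarrow> bool" where
  "closed_under_reversal u \<longleftrightarrow> (\<forall>w. is_factor w u \<longrightarrow> is_factor (rev w) u)"

definition pal_factors :: "'a list \<Rightarrow> 'a list set" where
  "pal_factors w = {p. sublist p w \<and> palindrome p}"

definition defect :: "'a list \<Rightarrow> int" where
  "defect w = int (length w) + 1 - int (card (pal_factors w))"

definition defect_inf :: "(nat \<Rightarrow> 'a) \<Rightarrow> ereal" where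
  "defect_inf u = (SUP w \<in> {w. is_factor w u}. ereal (of_int (defect w)))"

end

theory Submission
  imports Defs
begin

lemma pal_nth: "palindrome w \<longleftrightarrow> (\<forall>i<length w. w!i = w!(length w - 1 - i))"
  unfolding palindrome_def
proof
  assume "rev w = w"
  show "\<forall>i<length w. w!i = w!(length w - 1 - i)"
  proof (intro allI impI)
    fix i assume i: "i < length w"
    have "w!i = rev w ! i" using \<open>rev w = w\<close> by simp
    also have "\<dots> = w!(length w - Suc i)" using i by (simp add: rev_nth)
    finally show "w!i = w!(length w - 1 - i)" by simp
  qed
next
  assume h: "\<forall>i<length w. w!i = w!(length w - 1 - i)"
  show "rev w = w"
  proof (rule nth_equalityI)
    show "length (rev w) = length w" by simp
    fix i assume i: "i < length (rev w)"
    then have i': "i < length w" by simp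
    have "rev w ! i = w!(length w - Suc i)" using i' by (simp add: rev_nth)
    also have "\<dots> = w!(length w - 1 - (length w - Suc i))"
      using h i' by (metis diff_less length_greater_0_conv less_nat_zero_code list.size(3) zero_less_Suc)
    also have "length w - 1 - (length w - Suc i) = i" using i' by simp
    finally show "rev w ! i = w ! i" .
  qed
qed

lemma idx_sublist:
  assumes "j + length w \<le> length r" "\<forall>l<length w. w!l = r!(j+l)"
  shows "sublist w r"
proof -
  have "w = take (length w) (drop j r)"
    by (rule nth_equalityI) (use assms in auto)
  then show ?thesis
    by (metis sublist_drop sublist_order.dual_order.trans sublist_take)
qed

lemma sublist_idx:
  assumes "sublist w r"
  shows "\<exists>j. j + length w \<le> length r \<and> (\<forall>l<length w. w!l = r!(j+l))"
proof -
  obtain ps ss where "r = ps @ w @ ss" using assms unfolding sublist_def by blast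
  then show ?thesis
    by (intro exI[of _ "length ps"]) (auto simp: nth_append)
qed

lemma suffix_idx: "suffix s t \<Longrightarrow> \<forall>i<length s. s!i = t!(length t - length s + i)"
  unfolding suffix_def by (auto simp: nth_append)

lemma is_factor_iff: "is_factor w u \<longleftrightarrow> (\<exists>i. \<forall>l<length w. w!l = u (i+l))"
proof
  assume "is_factor w u"
  then obtain i where "w = factor_at u i (length w)" unfolding is_factor_def by blast
  then have "\<forall>l<length w. w!l = u (i+l)"
    by (metis add_diff_cancel_left' factor_at_def nth_map_upt)
  then show "\<exists>i. \<forall>l<length w. w!l = u (i+l)" by blast
next
  assume "\<exists>i. \<forall>l<length w. w!l = u (i+l)"
  then obtain i where h: "\<forall>l<length w. w!l = u (i+l)" by blast
  have "w = factor_at u i (length w)"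
    unfolding factor_at_def by (rule nth_equalityI) (auto simp: h)
  then show "is_factor w u" unfolding is_factor_def by blast
qed

lemma factor_sublist:
  assumes "is_factor w u" "sublist v w"
  shows "is_factor v u"
proof -
  obtain i where i: "\<forall>l<length w. w!l = u (i+l)" using assms(1) is_factor_iff by blast
  obtain j where j: "j + length v \<le> length w" "\<forall>l<length v. v!l = w!(j+l)"
    using sublist_idx[OF assms(2)] by blast
  have "\<forall>l<length v. v!l = u (i+j+l)"
    using i j by (simp add: add.assoc)
  then show ?thesis using is_factor_iff by blast
qed

definition bad :: "'a list \<Rightarrow> bool" where
  "bad r \<longleftrightarrow> (\<forall>s. palindrome s \<and> suffix s r \<longrightarrow> sublist s (butlast r))"

lemma finite_pal: "finite (pal_factors w)"
proof -
  have "pal_factors w \<subseteq> {xs. set xs \<subseteq> set w \<and> length xs \<le> length w}"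
    unfolding pal_factors_def using set_mono_sublist sublist_length_le by blast
  then show ?thesis using finite_lists_length_le finite_subset by blast
qed

lemma lemA: fixes w :: "'a list" shows "(\<forall>v. prefix v w \<longrightarrow> v \<noteq> [] \<longrightarrow> \<not> bad v) \<Longrightarrow> length w + 1 \<le> card (pal_factors w)"
proof (induction w rule: rev_induct)
  case Nil
  have "pal_factors ([]::'a list) = {[]}" unfolding pal_factors_def palindrome_def by auto
  then show ?case by simp
next
  case (snoc a w)
  have IH: "length w + 1 \<le> card (pal_factors w)"
    using snoc by (meson prefix_append prefix_order.trans)
  have "\<not> bad (w @ [a])" using snoc.prems by simp
  then obtain s where s: "palindrome s" "suffix s (w@[a])" "\<not> sublist s w"
    unfolding bad_def by auto
  have sub: "pal_factors w \<subseteq> pal_factors (w@[a])"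
    unfolding pal_factors_def by (auto intro: sublist_order.dual_order.trans[OF sublist_append_rightI])
  have "s \<in> pal_factors (w@[a])" "s \<notin> pal_factors w"
    using s suffix_imp_sublist unfolding pal_factors_def by auto
  then have "insert s (pal_factors w) \<subseteq> pal_factors (w@[a])" using sub by auto
  then have "card (insert s (pal_factors w)) \<le> card (pal_factors (w@[a]))"
    using finite_pal card_mono by blast
  moreover have "card (insert s (pal_factors w)) = Suc (card (pal_factors w))"
    using finite_pal[of w] \<open>s \<notin> pal_factors w\<close> by simp
  ultimately show ?case using IH by simp
qed


locale crw =
  fixes r :: "nat list" and p :: "nat list" and k :: nat
  assumes bin: "\<forall>i<length r. r!i \<le> 1"
  and pne: "p \<noteq> []" and ppal: "palindrome p"
  and pre: "\<forall>l<length p. r!l = p!l"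
  and suf: "\<forall>l<length p. r!(length r - length p + l) = p!l"
  and plen: "length p < length r"
  and noocc: "\<forall>i. 1 \<le> i \<longrightarrow> i + length p < length r \<longrightarrow> \<not>(\<forall>l<length p. r!(i+l) = p!l)"
  and klen: "k < length r"
  and kmir: "\<forall>i<k. r!i = r!(length r - 1 - i)"
  and kmis: "r!k \<noteq> r!(length r - 1 - k)"
begin

abbreviation "L \<equiv> length r"
abbreviation "P \<equiv> length p"

lemma ppal': "l < P \<Longrightarrow> p!l = p!(P - 1 - l)"
  using ppal pal_nth by blast

lemma F1: "P \<le> k"
proof (rule ccontr)
  assume "\<not> P \<le> k"
  then have kP: "k < P" by simp
  have "r!k = p!k" using pre kP by blast
  also have "\<dots> = p!(P - 1 - k)" using ppal' kP by blast
  also have "\<dots> = r!(L - P + (P - 1 - k))"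
  proof -
    have "P - 1 - k < P" using kP by simp
    then show ?thesis using suf by simp
  qed
  also have "L - P + (P - 1 - k) = L - 1 - k" using kP plen by simp
  finally show False using kmis by simp
qed

lemma k1: "1 \<le> k" using F1 pne by (cases p) auto

lemma F2: "2*k + 2 \<le> L"
proof (rule ccontr)
  assume "\<not> 2*k + 2 \<le> L"
  then have "L - 1 - k \<le> k" by simp
  then consider "L - 1 - k < k" | "L - 1 - k = k" by linarith
  then show False
  proof cases
    case 1
    have "r!(L - 1 - k) = r!(L - 1 - (L - 1 - k))" using kmir 1 by blast
    also have "L - 1 - (L - 1 - k) = k" using klen by simp
    finally show False using kmis by simp
  next
    case 2 then show False using kmis by simp
  qed
qed

lemma mir: "x < k \<Longrightarrow> r!(L - 1 - x) = r!x" using kmir by simp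

lemma letters: "r!0 \<le> 1" "r!k \<le> 1" "r!(L-1-k) \<le> 1"
proof -
  have "0 < L" "k < L" "L - 1 - k < L" using F2 by auto
  then show "r!0 \<le> 1" "r!k \<le> 1" "r!(L-1-k) \<le> 1" using bin by blast+
qed

definition q where "q = take (k-1) (drop 1 r)"

lemma q_len: "length q = k - 1" unfolding q_def using F2 by simp
lemma q_nth: "l < k - 1 \<Longrightarrow> q!l = r!(1+l)" unfolding q_def using F2 by simp

lemma take_eqc: "take (k+1) r = [r!0] @ q @ [r!k]"
proof (rule nth_equalityI)
  show "length (take (k+1) r) = length ([r!0] @ q @ [r!k])" using F2 q_len k1 by simp
  fix i assume "i < length (take (k+1) r)"
  then have i: "i < k+1" using F2 by simp
  consider "i = 0" | "1 \<le> i" "i < k" | "i = k" using i by linarith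
  then show "take (k+1) r ! i = ([r!0] @ q @ [r!k]) ! i"
  proof cases
    case 1 then show ?thesis by simp
  next
    case 2
    have "i - 1 < length q" using 2 q_len by simp
    then have "([r!0] @ q @ [r!k]) ! i = q!(i-1)" using 2 by (simp add: nth_append)
    also have "\<dots> = r!i" using q_nth 2 by simp
    finally show ?thesis using i by simp
  next
    case 3
    then show ?thesis using q_len k1 by (simp add: nth_append)
  qed
qed

theorem core2: "\<not> palindrome q"
proof
  assume qp: "palindrome q"
  have qpal: "\<And>l. l < k - 1 \<Longrightarrow> r!(1+l) = r!(k - 1 - l)"
  proof -
    fix l assume l: "l < k - 1"
    have "r!(1+l) = q!l" using q_nth l by simp
    also have "\<dots> = q!(k - 1 - 1 - l)" using qp pal_nth q_len l by metis
    also have "\<dots> = r!(1 + (k - 1 - 1 - l))" using q_nth l by simp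
    also have "1 + (k - 1 - 1 - l) = k - 1 - l" using l by simp
    finally show "r!(1+l) = r!(k - 1 - l)" .
  qed
  have ce: "r!k \<noteq> r!0"
  proof
    assume eq: "r!k = r!0"
    define a where "a = k + 1 - P"
    have a1: "1 \<le> a" unfolding a_def using F1 by simp
    have aP: "a + P < L" unfolding a_def using F1 F2 by simp
    have "\<forall>l<P. r!(a+l) = p!l"
    proof (intro allI impI)
      fix l assume l: "l < P"
      show "r!(a+l) = p!l"
      proof (cases "l = P - 1")
        case True
        then have "a + l = k" unfolding a_def using F1 l by simp
        then have "r!(a+l) = r!0" using eq by simp
        also have "\<dots> = p!0" using pre pne by simp
        also have "\<dots> = p!(P - 1 - 0)" using ppal'[of 0] pne by simp
        finally show ?thesis using True by simp
      next
        case False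
        then have l': "l < P - 1" using l by simp
        have x: "a + l - 1 < k - 1" unfolding a_def using l' F1 by simp
        have "r!(a+l) = r!(1 + (a + l - 1))" using a1 by simp
        also have "\<dots> = r!(k - 1 - (a + l - 1))" using qpal x by blast
        also have "k - 1 - (a + l - 1) = P - 1 - l" unfolding a_def using F1 l' by simp
        also have "r!(P - 1 - l) = p!(P - 1 - l)" using pre l by simp
        also have "\<dots> = p!l" using ppal'[OF l] by simp
        finally show ?thesis .
      qed
    qed
    then show False using noocc a1 aP by blast
  qed
  have de: "r!(L-1-k) \<noteq> r!0"
  proof
    assume eq: "r!(L-1-k) = r!0"
    define b where "b = L - 1 - k"
    have b1: "1 \<le> b" unfolding b_def using F2 by simp
    have bP: "b + P < L" unfolding b_def using F1 F2 by simp
    have "\<forall>l<P. r!(b+l) = p!l"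
    proof (intro allI impI)
      fix l assume l: "l < P"
      show "r!(b+l) = p!l"
      proof (cases "l = 0")
        case True
        then show ?thesis using eq pre pne unfolding b_def by simp
      next
        case False
        have x: "k - l < k" using False k1 by simp
        have "b + l = L - 1 - (k - l)" unfolding b_def using F1 F2 l False by simp
        then have "r!(b+l) = r!(k - l)" using mir x by simp
        also have "\<dots> = r!(1 + (k - l - 1))"
        proof -
          have "1 + (k - l - 1) = k - l" using F1 l by linarith
          then show ?thesis by simp
        qed
        also have "\<dots> = r!(k - 1 - (k - l - 1))" using qpal[of "k - l - 1"] F1 l False by linarith
        also have "k - 1 - (k - l - 1) = l" using F1 l False by simp
        also have "r!l = p!l" using pre l by simp
        finally show ?thesis .
      qed
    qed
    then show False using noocc b1 bP by blast
  qed
  show False using ce de kmis letters by linarith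
qed

end

locale crw2 = crw +
  assumes good: "\<forall>t. sublist t r \<longrightarrow> t \<noteq> [] \<longrightarrow> length t < length r \<longrightarrow> \<not> bad t"
begin

theorem core1: "\<exists>j. 2 \<le> j \<and> j + k + 1 \<le> L \<and> r!(j-1) \<noteq> r!0 \<and>
   (\<forall>l<k-1. r!(j+l) = r!(1+l)) \<and> r!(j+k-1) = r!(L - 1 - k)"
proof -
  define J where "J = {j. 1 \<le> j \<and> j + k + 1 \<le> L \<and> (\<forall>l<k-1. r!(j+l) = r!(1+l))}"
  have finJ: "finite J" unfolding J_def by (rule finite_subset[of _ "{..L}"]) auto
  have oneJ: "1 \<in> J" unfolding J_def using F2 k1 by auto
  define j where "j = Max J"
  have jJ: "j \<in> J" unfolding j_def using finJ oneJ Max_in by blast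
  have jmax: "\<And>j'. j' \<in> J \<Longrightarrow> j' \<le> j" unfolding j_def using finJ Max_ge by blast
  have j1: "1 \<le> j" and jL: "j + k + 1 \<le> L" and jq: "\<forall>l<k-1. r!(j+l) = r!(1+l)"
    using jJ unfolding J_def by auto
  define T where "T = L - 1 - j"
  define t where "t = take T (drop j r)"
  have tlen: "length t = T" unfolding t_def T_def using jL by simp
  have tnth: "\<And>i. i < T \<Longrightarrow> t!i = r!(j+i)" unfolding t_def T_def using jL by simp
  have Tk: "k \<le> T" unfolding T_def using jL by simp
  have tsub: "sublist t r" unfolding t_def
    by (metis sublist_drop sublist_order.dual_order.trans sublist_take)
  have tne: "t \<noteq> []" using tlen Tk k1 by auto
  have tlt: "length t < L" using tlen j1 jL unfolding T_def by simp
  have "\<not> bad t" using good tsub tne tlt by blast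
  then obtain s where spal: "palindrome s" and ssuf: "suffix s t" and snot: "\<not> sublist s (butlast t)"
    unfolding bad_def by blast
  define S where "S = length s"
  have ST: "S \<le> T" unfolding S_def using suffix_length_le[OF ssuf] tlen by simp
  have snth: "\<And>i. i < S \<Longrightarrow> s!i = r!(j + (T - S + i))"
  proof -
    fix i assume i: "i < S"
    have "s!i = t!(length t - length s + i)" using suffix_idx[OF ssuf] i S_def by simp
    also have "\<dots> = r!(j + (T - S + i))" using tnth tlen S_def i ST by simp
    finally show "s!i = r!(j + (T - S + i))" .
  qed
  have spal': "\<And>i. i < S \<Longrightarrow> s!i = s!(S - 1 - i)" using spal pal_nth S_def by blast
  have smir: "\<And>i. i < S \<Longrightarrow> i + 1 < k \<Longrightarrow> s!i = r!(1+i)"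
  proof -
    fix i assume i: "i < S" and ik: "i + 1 < k"
    have "s!i = s!(S - 1 - i)" using spal' i by blast
    also have "\<dots> = r!(j + (T - S + (S - 1 - i)))" using snth i by simp
    also have "j + (T - S + (S - 1 - i)) = L - 1 - (i + 1)"
    proof -
      have ST2: "S \<le> L - 1 - j" using ST T_def by simp
      show ?thesis unfolding T_def using i ST2 jL by arith
    qed
    also have "r!(L - 1 - (i + 1)) = r!(i+1)" using mir ik by blast
    finally show "s!i = r!(1+i)" by simp
  qed
  have pref_contra: "(\<forall>i<S. s!i = t!i) \<Longrightarrow> S < T \<Longrightarrow> False"
  proof -
    assume h: "\<forall>i<S. s!i = t!i" and lt: "S < T"
    have "sublist s (butlast t)"
      by (rule idx_sublist[of 0]) (use h lt tlen S_def in \<open>auto simp: nth_butlast\<close>)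
    then show False using snot by blast
  qed
  have tpal: "\<forall>i<T. t!i = t!(T - 1 - i)"
  proof (cases "S < k - 1")
    case True
    have "\<forall>i<S. s!i = t!i"
    proof (intro allI impI)
      fix i assume i: "i < S"
      have "s!i = r!(1+i)" using smir i True by simp
      also have "\<dots> = r!(j+i)" using jq i True by simp
      also have "\<dots> = t!i" using tnth i ST by simp
      finally show "s!i = t!i" .
    qed
    moreover have "S < T" using True Tk by linarith
    ultimately have False using pref_contra by blast
    then show ?thesis by blast
  next
    case False
    define a where "a = T - S"
    have aq: "\<forall>l<k-1. r!(j+a+l) = r!(1+l)"
    proof (intro allI impI)
      fix l assume l: "l < k - 1"
      have "r!(j+a+l) = s!l" using snth l False unfolding a_def by (simp add: add.assoc)
      also have "\<dots> = r!(1+l)" using smir l False by simp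
      finally show "r!(j+a+l) = r!(1+l)" .
    qed
    consider "a = 0" | "a > 0" "S = k - 1" | "a > 0" "S > k - 1" using False by linarith
    then show ?thesis
    proof cases
      case 1
      then have ST': "S = T" unfolding a_def using ST by simp
      show ?thesis
      proof (intro allI impI)
        fix i assume i: "i < T"
        have "t!i = s!i" using snth i ST' tnth by simp
        also have "\<dots> = s!(S - 1 - i)" using spal' i ST' by blast
        also have "\<dots> = t!(T - 1 - i)" using snth i ST' tnth by simp
        finally show "t!i = t!(T - 1 - i)" .
      qed
    next
      case 2
      have "\<forall>i<S. s!i = t!i"
      proof (intro allI impI)
        fix i assume i: "i < S"
        have "s!i = r!(1+i)" using smir i 2 by simp
        also have "\<dots> = r!(j+i)" using jq i 2 by simp
        also have "\<dots> = t!i" using tnth i ST by simp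
        finally show "s!i = t!i" .
      qed
      moreover have "S < T" using 2 unfolding a_def by simp
      ultimately have False using pref_contra by blast
      then show ?thesis by blast
    next
      case 3
      have "j + a \<in> J" unfolding J_def
      proof (intro CollectI conjI)
        show "1 \<le> j + a" using j1 by simp
        show "j + a + k + 1 \<le> L" using 3 ST unfolding a_def T_def using jL by simp
        show "\<forall>l<k-1. r!(j+a+l) = r!(1+l)" using aq by blast
      qed
      then have False using jmax 3 by fastforce
      then show ?thesis by blast
    qed
  qed
  have dfact: "r!(j+k-1) = r!(L - 1 - k)"
  proof -
    have "k - 1 < T" using Tk k1 by simp
    then have "t!(k-1) = t!(T - 1 - (k - 1))" using tpal by blast
    moreover have "t!(k-1) = r!(j+(k-1))" using tnth Tk k1 by simp
    moreover have "t!(T - 1 - (k - 1)) = r!(j + (T - 1 - (k - 1)))" using tnth Tk k1 by simp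
    moreover have "j + (T - 1 - (k - 1)) = L - 1 - k" unfolding T_def using jL k1 by simp
    moreover have "j + (k - 1) = j + k - 1" using k1 by simp
    ultimately show ?thesis by simp
  qed
  have j2: "2 \<le> j"
  proof (rule ccontr)
    assume "\<not> 2 \<le> j"
    then have "j = 1" using j1 by simp
    then show False using dfact kmis k1 by simp
  qed
  have fne: "r!(j-1) \<noteq> r!0"
  proof
    assume eq: "r!(j-1) = r!0"
    have "\<forall>l<P. r!(j - 1 + l) = p!l"
    proof (intro allI impI)
      fix l assume l: "l < P"
      show "r!(j - 1 + l) = p!l"
      proof (cases "l = 0")
        case True then show ?thesis using eq pre pne by simp
      next
        case False
        have l1: "l - 1 < k - 1" using l F1 False by linarith
        have "r!(j - 1 + l) = r!(j + (l - 1))" using False j1 by (simp add: algebra_simps)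
        also have "\<dots> = r!(1 + (l - 1))" using jq l1 by blast
        also have "\<dots> = r!l" using False by simp
        also have "\<dots> = p!l" using pre l by simp
        finally show ?thesis .
      qed
    qed
    moreover have "1 \<le> j - 1" using j2 by simp
    moreover have "j - 1 + P < L" using jL F1 j2 by simp
    ultimately show False using noocc by blast
  qed
  show ?thesis using j2 jL fne jq dfact by blast
qed

theorem core1': "sublist ([1 - r!0] @ q @ [r!(L - 1 - k)]) r"
proof -
  obtain j where j2: "2 \<le> j" and jL: "j + k + 1 \<le> L" and fne: "r!(j-1) \<noteq> r!0"
    and jq: "\<forall>l<k-1. r!(j+l) = r!(1+l)" and dfact: "r!(j+k-1) = r!(L - 1 - k)"
    using core1 by blast
  have f: "r!(j-1) = 1 - r!0"
  proof -
    have "r!(j-1) \<le> 1" using bin jL j2 by simp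
    then show ?thesis using fne letters by linarith
  qed
  show ?thesis
  proof (rule idx_sublist[of "j - 1"])
    show "j - 1 + length ([1 - r!0] @ q @ [r!(L - 1 - k)]) \<le> L"
      using q_len jL j2 k1 by simp
    show "\<forall>l<length ([1 - r!0] @ q @ [r!(L - 1 - k)]). ([1 - r!0] @ q @ [r!(L - 1 - k)]) ! l = r ! (j - 1 + l)"
    proof (intro allI impI)
      fix l assume "l < length ([1 - r!0] @ q @ [r!(L - 1 - k)])"
      then have l: "l < k + 1" using q_len k1 by simp
      consider "l = 0" | "1 \<le> l" "l < k" | "l = k" using l by linarith
      then show "([1 - r!0] @ q @ [r!(L - 1 - k)]) ! l = r ! (j - 1 + l)"
      proof cases
        case 1 then show ?thesis using f by simp
      next
        case 2
        have "l - 1 < length q" using 2 q_len by simp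
        then have "([1 - r!0] @ q @ [r!(L - 1 - k)]) ! l = q!(l-1)" using 2 by (simp add: nth_append)
        also have "\<dots> = r!(1 + (l - 1))" using q_nth 2 by simp
        also have "\<dots> = r!(j + (l - 1))"
        proof -
          have "l - 1 < k - 1" using 2 by simp
          then show ?thesis using jq by metis
        qed
        also have "j + (l - 1) = j - 1 + l" using 2 j2 by simp
        finally show ?thesis .
      next
        case 3
        have "([1 - r!0] @ q @ [r!(L - 1 - k)]) ! l = r!(L - 1 - k)" using 3 q_len k1 by (simp add: nth_append)
        also have "\<dots> = r!(j + k - 1)" using dfact by simp
        also have "j + k - 1 = j - 1 + l" using 3 j2 by simp
        finally show ?thesis .
      qed
    qed
  qed
qed

end

lemma rev_nth': "i < length r \<Longrightarrow> rev r ! i = r!(length r - 1 - i)"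
  by (simp add: rev_nth)

theorem lemma23:
  fixes u :: "nat \<Rightarrow> nat"
  assumes "\<forall>n. u n \<in> {0, 1}"
    and "closed_under_reversal u"
    and "defect_inf u > 0"
  shows "\<exists>q. is_factor q u \<and> \<not> palindrome q \<and>
           is_factor ([0] @ q @ [0]) u \<and> is_factor ([0] @ q @ [1]) u \<and>
           is_factor ([1] @ q @ [0]) u \<and> is_factor ([1] @ q @ [1]) u"
proof -
  obtain w where wf: "is_factor w u" and wd: "0 < defect w"
  proof -
    have "0 < (SUP w\<in>{w. is_factor w u}. ereal (of_int (defect w)))"
      using assms(3) unfolding defect_inf_def by simp
    then have "\<exists>w\<in>{w. is_factor w u}. 0 < ereal (of_int (defect w))"
      by (simp only: less_SUP_iff)
    then obtain w where "w \<in> {w. is_factor w u}" "0 < ereal (of_int (defect w))"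
      by blast
    then show ?thesis using that by simp
  qed
  obtain v where vp: "prefix v w" and vne: "v \<noteq> []" and vb: "bad v"
  proof -
    have "\<not> (\<forall>v. prefix v w \<longrightarrow> v \<noteq> [] \<longrightarrow> \<not> bad v)"
    proof
      assume "\<forall>v. prefix v w \<longrightarrow> v \<noteq> [] \<longrightarrow> \<not> bad v"
      then have "length w + 1 \<le> card (pal_factors w)" by (rule lemA)
      then show False using wd unfolding defect_def by simp
    qed
    then show ?thesis using that by blast
  qed
  have vf: "is_factor v u" using factor_sublist[OF wf prefix_imp_sublist[OF vp]] .
  define Q where "Q = (\<lambda>r. is_factor r u \<and> r \<noteq> [] \<and> bad r)"
  have "Q v" unfolding Q_def using vf vne vb by simp
  then obtain r where Qr: "Q r" and rmin: "\<And>y. Q y \<Longrightarrow> length r \<le> length y"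
    using ex_has_least_nat[of Q v length] by blast
  have rf: "is_factor r u" and rne: "r \<noteq> []" and rb: "bad r" using Qr unfolding Q_def by auto
  have good_u: "\<And>t. is_factor t u \<Longrightarrow> t \<noteq> [] \<Longrightarrow> length t < length r \<Longrightarrow> \<not> bad t"
    using rmin unfolding Q_def by fastforce
  define L where "L = length r"
  obtain p where ppal: "palindrome p" and psuf: "suffix p r"
    and pmax: "\<And>s. palindrome s \<Longrightarrow> suffix s r \<Longrightarrow> length s \<le> length p"
  proof -
    have "palindrome [] \<and> suffix [] r" unfolding palindrome_def by simp
    moreover have "\<forall>y. palindrome y \<and> suffix y r \<longrightarrow> length y < length r + 1"
      using suffix_length_le by fastforce
    ultimately obtain p where "palindrome p \<and> suffix p r"
      "\<forall>y. palindrome y \<and> suffix y r \<longrightarrow> length y \<le> length p"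
      using ex_has_greatest_nat[of "\<lambda>s. palindrome s \<and> suffix s r" "[]" length "length r + 1"] by blast
    then show ?thesis using that by blast
  qed
  define P where "P = length p"
  have pne: "p \<noteq> []"
  proof -
    have "palindrome [last r]" unfolding palindrome_def by simp
    moreover have "suffix [last r] r" using rne
      by (metis append_butlast_last_id suffixI)
    ultimately have "1 \<le> length p" using pmax by fastforce
    then show ?thesis by auto
  qed
  have pnth: "\<And>l. l < P \<Longrightarrow> p!l = p!(P - 1 - l)" using ppal pal_nth P_def by blast
  obtain i0 where i0: "i0 + P \<le> L - 1" "\<forall>l<P. p!l = r!(i0+l)"
  proof -
    have "sublist p (butlast r)" using rb ppal psuf unfolding bad_def by blast
    then obtain i where h1: "i + P \<le> length (butlast r)" and h2: "\<forall>l<P. p!l = butlast r!(i+l)"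
      using sublist_idx P_def by blast
    have "\<forall>l<P. butlast r!(i+l) = r!(i+l)"
    proof (intro allI impI)
      fix l assume "l < P"
      then have "i + l < length (butlast r)" using h1 by linarith
      then show "butlast r!(i+l) = r!(i+l)" by (rule nth_butlast)
    qed
    then show ?thesis using that h1 h2 L_def by auto
  qed
  have noocc: "\<forall>i. 1 \<le> i \<longrightarrow> i + P < L \<longrightarrow> \<not>(\<forall>l<P. r!(i+l) = p!l)"
  proof (intro allI impI notI)
    fix i assume i1: "1 \<le> i" and iP: "i + P < L" and occ: "\<forall>l<P. r!(i+l) = p!l"
    define t where "t = drop i r"
    have tf: "is_factor t u" unfolding t_def using factor_sublist[OF rf sublist_drop] .
    have tlen: "length t = L - i" unfolding t_def L_def by simp
    have tne: "t \<noteq> []" using tlen iP by auto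
    have tlt: "length t < length r" using tlen i1 iP L_def by simp
    have "bad t"
      unfolding bad_def
    proof (intro allI impI)
      fix s assume sh: "palindrome s \<and> suffix s t"
      have "suffix s r" using sh unfolding t_def suffix_def
        by (metis append.assoc append_take_drop_id)
      then have sP: "length s \<le> P" using pmax sh P_def by blast
      have ssp: "suffix s p" using suffix_length_suffix[OF \<open>suffix s r\<close> psuf] sP P_def by blast
      have "\<forall>x<length s. s!x = t!x"
      proof (intro allI impI)
        fix x assume x: "x < length s"
        have "s!x = s!(length s - 1 - x)" using sh pal_nth x by blast
        also have "\<dots> = p!(P - length s + (length s - 1 - x))"
          using suffix_idx[OF ssp] x P_def by simp
        also have "P - length s + (length s - 1 - x) = P - 1 - x" using x sP by simp
        also have "p!(P - 1 - x) = p!x" using pnth[of x] x sP by simp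
        also have "\<dots> = r!(i+x)" using occ x sP by simp
        also have "\<dots> = t!x" unfolding t_def using iP x sP L_def by simp
        finally show "s!x = t!x" .
      qed
      then show "sublist s (butlast t)"
        by (intro idx_sublist[of 0]) (use sP tlen iP in \<open>auto simp: nth_butlast\<close>)
    qed
    then show False using good_u tf tne tlt by blast
  qed
  have i00: "i0 = 0"
  proof (rule ccontr)
    assume "i0 \<noteq> 0"
    moreover have "i0 + P < L" using i0 rne L_def by (cases r) auto
    moreover have "\<forall>l<P. r!(i0+l) = p!l" using i0(2) by auto
    ultimately show False using noocc by (metis less_one not_le)
  qed
  have pre: "\<forall>l<P. r!l = p!l" using i0 i00 by simp
  have suf: "\<forall>l<P. r!(L - P + l) = p!l" using suffix_idx[OF psuf] P_def L_def by simp
  have plen: "P < L" using i0 rne L_def by (cases r) auto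
  have rnp: "\<not> palindrome r"
  proof
    assume "palindrome r"
    then have "L \<le> P" using pmax[of r] L_def P_def by simp
    then show False using plen by simp
  qed
  have "\<exists>i<L. r!i \<noteq> r!(L - 1 - i)" using rnp pal_nth L_def by blast
  define k where "k = (LEAST i. i < L \<and> r!i \<noteq> r!(L - 1 - i))"
  have kk: "k < L \<and> r!k \<noteq> r!(L - 1 - k)"
    unfolding k_def by (rule LeastI_ex) (use \<open>\<exists>i<L. r!i \<noteq> r!(L - 1 - i)\<close> in blast)
  have kmir: "\<forall>i<k. r!i = r!(L - 1 - i)"
  proof (intro allI impI)
    fix i assume "i < k"
    then have "\<not> (i < L \<and> r!i \<noteq> r!(L - 1 - i))" unfolding k_def by (rule not_less_Least)
    then show "r!i = r!(L - 1 - i)" using \<open>i < k\<close> kk by simp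
  qed
  have bin: "\<forall>i<L. r!i \<le> 1"
  proof -
    obtain a where a: "\<forall>l<length r. r!l = u (a+l)" using rf is_factor_iff by blast
    show ?thesis
    proof (intro allI impI)
      fix i assume "i < L"
      then have "r!i = u (a+i)" using a L_def by simp
      moreover have "u (a+i) \<in> {0,1}" using assms(1) by blast
      ultimately show "r!i \<le> 1" by auto
    qed
  qed
  have rrf: "is_factor (rev r) u" using assms(2) rf unfolding closed_under_reversal_def by blast
  have revn: "\<And>i. i < L \<Longrightarrow> rev r ! i = r!(L - 1 - i)" using rev_nth' L_def by blast
  have A: "crw2 r p k"
    unfolding crw2_def crw_def crw2_axioms_def
    using bin pne ppal pre suf plen noocc kk kmir L_def P_def
      good_u factor_sublist[OF rf] sublist_length_le
    by auto
  have B: "crw2 (rev r) p k"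
    unfolding crw2_def crw_def crw2_axioms_def
  proof (intro conjI)
    show "\<forall>i<length (rev r). rev r ! i \<le> 1" using bin revn L_def by simp
    show "p \<noteq> []" by fact
    show "palindrome p" by fact
    show "\<forall>l<length p. rev r ! l = p ! l"
    proof (intro allI impI)
      fix l assume l: "l < length p"
      have "rev r ! l = r!(L - 1 - l)" using revn l plen P_def by simp
      also have "L - 1 - l = L - P + (P - 1 - l)" using l plen P_def by simp
      also have "r!(L - P + (P - 1 - l)) = p!(P - 1 - l)"
      proof -
        have "P - 1 - l < P" using l P_def by simp
        then show ?thesis using suf by blast
      qed
      also have "\<dots> = p!l" using pnth[of l] l P_def by simp
      finally show "rev r ! l = p ! l" .
    qed
    show "\<forall>l<length p. rev r ! (length (rev r) - length p + l) = p ! l"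
    proof (intro allI impI)
      fix l assume l: "l < length p"
      have "rev r ! (length (rev r) - length p + l) = r!(L - 1 - (L - P + l))"
        using revn l plen P_def L_def by simp
      also have "L - 1 - (L - P + l) = P - 1 - l" using l plen P_def by simp
      also have "r!(P - 1 - l) = p!(P - 1 - l)" using pre l P_def by simp
      also have "\<dots> = p!l" using pnth[of l] l P_def by simp
      finally show "rev r ! (length (rev r) - length p + l) = p ! l" .
    qed
    show "length p < length (rev r)" using plen P_def L_def by simp
    show "\<forall>i. 1 \<le> i \<longrightarrow> i + length p < length (rev r) \<longrightarrow> \<not> (\<forall>l<length p. rev r ! (i + l) = p ! l)"
    proof (intro allI impI notI)
      fix i assume i1: "1 \<le> i" and iP: "i + length p < length (rev r)"
        and occ: "\<forall>l<length p. rev r ! (i + l) = p ! l"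
      define i' where "i' = L - i - P"
      have "\<forall>l<P. r!(i'+l) = p!l"
      proof (intro allI impI)
        fix l assume l: "l < P"
        have "i + (P - 1 - l) < L" using iP l P_def L_def by simp
        then have "rev r ! (i + (P - 1 - l)) = r!(L - 1 - (i + (P - 1 - l)))" using revn by blast
        also have "L - 1 - (i + (P - 1 - l)) = i' + l" unfolding i'_def using iP l P_def L_def by simp
        finally have "r!(i'+l) = rev r ! (i + (P - 1 - l))" by simp
        also have "\<dots> = p!(P - 1 - l)"
        proof -
          have "P - 1 - l < length p" using l P_def by simp
          then show ?thesis using occ by blast
        qed
        also have "\<dots> = p!l" using pnth[of l] l P_def by simp
        finally show "r!(i'+l) = p!l" .
      qed
      moreover have "1 \<le> i'" "i' + P < L" unfolding i'_def using i1 iP P_def L_def by auto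
      ultimately show False using noocc by blast
    qed
    show "k < length (rev r)" using kk L_def by simp
    show "\<forall>i<k. rev r ! i = rev r ! (length (rev r) - 1 - i)"
    proof (intro allI impI)
      fix i assume i: "i < k"
      have "rev r ! i = r!(L - 1 - i)" using revn i kk by simp
      also have "\<dots> = r!i" using kmir i by simp
      also have "\<dots> = r!(L - 1 - (L - 1 - i))" using i kk by simp
      also have "\<dots> = rev r ! (L - 1 - i)" using revn[of "L - 1 - i"] i kk by simp
      finally show "rev r ! i = rev r ! (length (rev r) - 1 - i)" using L_def by simp
    qed
    show "rev r ! k \<noteq> rev r ! (length (rev r) - 1 - k)"
    proof -
      have "rev r ! k = r!(L - 1 - k)" using revn kk by simp
      moreover have "rev r ! (L - 1 - k) = r!(L - 1 - (L - 1 - k))" using revn kk by simp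
      moreover have "L - 1 - (L - 1 - k) = k" using kk by simp
      ultimately show ?thesis using kk L_def by simp
    qed
    show "\<forall>t. sublist t (rev r) \<longrightarrow> t \<noteq> [] \<longrightarrow> length t < length (rev r) \<longrightarrow> \<not> bad t"
      using good_u factor_sublist[OF rrf] by simp
  qed
  interpret A: crw2 r p k by (rule A)
  interpret B: crw2 "rev r" p k by (rule B)
  define q where "q = take (k-1) (drop 1 r)"
  have Aq: "A.q = q" unfolding A.q_def q_def ..
  have Bq: "B.q = q"
  proof -
    have "take (k-1) (drop 1 (rev r)) = q"
    proof (rule nth_equalityI)
      show "length (take (k-1) (drop 1 (rev r))) = length q" unfolding q_def by simp
      fix l assume "l < length (take (k-1) (drop 1 (rev r)))"
      then have l: "l < k - 1" "1 + l < L" using L_def by auto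
      have "take (k-1) (drop 1 (rev r)) ! l = rev r ! (1 + l)" using l L_def by simp
      also have "\<dots> = r!(L - 1 - (1 + l))" using revn l by blast
      also have "\<dots> = r!(1 + l)" using kmir l by simp
      also have "\<dots> = q!l" unfolding q_def using l L_def by simp
      finally show "take (k-1) (drop 1 (rev r)) ! l = q!l" .
    qed
    then show ?thesis unfolding B.q_def .
  qed
  have r0: "rev r ! 0 = r!0"
  proof -
    have "rev r ! 0 = r!(L - 1 - 0)" using revn kk by simp
    also have "\<dots> = r!0" using kmir A.k1 by simp
    finally show ?thesis .
  qed
  have rk: "rev r ! k = r!(L - 1 - k)" using revn kk by simp
  have rk': "rev r ! (L - 1 - k) = r!k"
  proof -
    have "rev r ! (L - 1 - k) = r!(L - 1 - (L - 1 - k))" using revn kk by simp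
    moreover have "L - 1 - (L - 1 - k) = k" using kk by simp
    ultimately show ?thesis by simp
  qed
  define e where "e = r!0"
  define c where "c = r!k"
  define d where "d = r!(L - 1 - k)"
  have W1: "is_factor ([e] @ q @ [c]) u"
    using factor_sublist[OF rf, of "take (k+1) r"] A.take_eqc Aq sublist_take e_def c_def by metis
  have W2: "is_factor ([e] @ q @ [d]) u"
    using factor_sublist[OF rrf, of "take (k+1) (rev r)"] B.take_eqc Bq sublist_take r0 rk e_def d_def
    by metis
  have W3: "is_factor ([1 - e] @ q @ [d]) u"
    using factor_sublist[OF rf A.core1'] Aq e_def d_def L_def by simp
  have W4: "is_factor ([1 - e] @ q @ [c]) u"
    using factor_sublist[OF rrf B.core1'] Bq r0 rk' e_def c_def L_def by simp
  have qnp: "\<not> palindrome q" using A.core2 Aq by simp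
  have qf: "is_factor q u" using factor_sublist[OF W1] by (metis sublist_appendI)
  have le: "e \<le> 1" "c \<le> 1" "d \<le> 1" "c \<noteq> d" using A.letters kk e_def c_def d_def L_def by auto
  have all: "\<And>a b. a \<le> 1 \<Longrightarrow> b \<le> 1 \<Longrightarrow> is_factor ([a] @ q @ [b]) u"
  proof -
    fix a b :: nat assume a: "a \<le> 1" and b: "b \<le> 1"
    have ae: "a = e \<or> a = 1 - e" using a le by linarith
    have bc: "b = c \<or> b = d" using b le by linarith
    show "is_factor ([a] @ q @ [b]) u" using ae bc W1 W2 W3 W4 by blast
  qed
  show ?thesis using qf qnp all by auto
qed

end
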